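(* Assume the setting below ($2\overline{s}$-sparse flatness, in the form of the reconstruction maps $\alpha_I$). Let $\mathcal{I}\subseteq\{1,\dots,p\}$ with $|\mathcal{I}|>p-2\overline{s}$ be such that $\mathrm{Check}(\mathcal{I})$ returns UNSAT. Then there exists $\mathcal{I}_{temp}\subseteq\mathcal{I}$ with $|\mathcal{I}_{temp}|\le p-2\overline{s}+1$ such that $\mathrm{Check}(\mathcal{I}_{temp})$ also returns UNSAT.
   Context: Consider the discrete-time system $x^{(t+1)}=f(x^{(t)},u^{(t)})$, $y^{(t)}=h(x^{(t)})+a^{(t)}$, with state in $\mathcal{X}\subseteq\mathbb{R}^n$, input in $\mathbb{R}^m$, and $p$ scalar sensors $y_i=h_i(x)+a_i$, where $a^{(t)}$ is an arbitrary attack vector. Fix a window length $\tau$ and an input sequence $u$ over the window. For sensor $i$, $H_{u,i}:\mathcal{X}\to\mathbb{R}^\tau$ maps the window-initial state $z$ to $\big(h_i(z),h_i(f_{u^{(1)}}(z)),\dots,h_i(f_{u^{(\tau-1)}\cdots u^{(1)}}(z))\big)$ ($k$-fold compositions of $f(\cdot,u^{(j)})$), and $H_{u,I}=(H_{u,i})_{i\in I}$. $Y=(Y_1,\dots,Y_p)$, $Y_i\in\mathbb{R}^\tau$, are the collected (possibly attacked) measurements over the window, and $Y_I=(Y_i)_{i\in I}$. $\overline{s}\le p/2$ is the bound on attacked sensors. The system is assumed $2\overline{s}$-sparse flat: for every set $I$ of sensors with $|I|\ge p-2\overline{s}$, the outputs of the sensors in $I$ form a flat output, so that there is a reconstruction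 map $\alpha_I:\mathbb{R}^{\tau|I|}\to\mathcal{X}$ with $\alpha_I(H_{u,I}(z))=z$ for all $z\in\mathcal{X}$. For such $I$, the procedure $\mathrm{Check}(I)$ computes $x:=\alpha_I(Y_I)$ and returns SAT if $\|Y_I-H_{u,I}(x)\|=0$ and UNSAT otherwise. *)

theory Defs
  imports "HOL-Analysis.Analysis"
begin

text \<open>Window-initial state z, input sequence u (u k = u^(k), k = 1..tau-1).
  traj f u z k is the k-fold composition f_{u^(k)} o ... o f_{u^(1)} applied to z.\<close>
fun traj :: "('x \<Rightarrow> 'u \<Rightarrow> 'x) \<Rightarrow> (nat \<Rightarrow> 'u) \<Rightarrow> 'x \<Rightarrow> nat \<Rightarrow> 'x" where
  "traj f u z 0 = z"
| "traj f u z (Suc k) = f (traj f u z k) (u (Suc k))"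

text \<open>Vectors in R^tau are functions nat => real, only components k < tau are relevant.
  Window measurements of all sensors: nat => nat => real (sensor index, time index).\<close>
definition Hu :: "('x \<Rightarrow> 'u \<Rightarrow> 'x) \<Rightarrow> (nat \<Rightarrow> 'x \<Rightarrow> real) \<Rightarrow> (nat \<Rightarrow> 'u) \<Rightarrow> nat
                 \<Rightarrow> 'x \<Rightarrow> nat \<Rightarrow> nat \<Rightarrow> real" where
  "Hu f h u tau z i k = (if k < tau then h i (traj f u z k) else 0)"

definition restr :: "nat set \<Rightarrow> nat \<Rightarrow> (nat \<Rightarrow> nat \<Rightarrow> real) \<Rightarrow> nat \<Rightarrow> nat \<Rightarrow> real" where
  "restr I tau Y i k = (if i \<in> I \<and> k < tau then Y i k else 0)"

definition residual :: "('x \<Rightarrow> 'u \<Rightarrow> 'x) \<Rightarrow> (nat \<Rightarrow> 'x \<Rightarrow> real) \<Rightarrow> (nat \<Rightarrow> 'u) \<Rightarrow> nat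
     \<Rightarrow> nat set \<Rightarrow> (nat \<Rightarrow> nat \<Rightarrow> real) \<Rightarrow> 'x \<Rightarrow> real" where
  "residual f h u tau I Y x = sqrt (\<Sum>i\<in>I. \<Sum>k<tau. (Y i k - Hu f h u tau x i k)^2)"

definition check_sat :: "('x \<Rightarrow> 'u \<Rightarrow> 'x) \<Rightarrow> (nat \<Rightarrow> 'x \<Rightarrow> real) \<Rightarrow> (nat \<Rightarrow> 'u) \<Rightarrow> nat
     \<Rightarrow> (nat set \<Rightarrow> (nat \<Rightarrow> nat \<Rightarrow> real) \<Rightarrow> 'x) \<Rightarrow> nat set \<Rightarrow> (nat \<Rightarrow> nat \<Rightarrow> real) \<Rightarrow> bool" where
  "check_sat f h u tau \<alpha> I Y = (residual f h u tau I Y (\<alpha> I (restr I tau Y)) = 0)"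

text \<open>2s-sparse flatness via reconstruction maps alpha_I : R^{tau|I|} -> X.\<close>
definition sparse_flat :: "('x \<Rightarrow> 'u \<Rightarrow> 'x) \<Rightarrow> (nat \<Rightarrow> 'x \<Rightarrow> real) \<Rightarrow> (nat \<Rightarrow> 'u) \<Rightarrow> nat
     \<Rightarrow> 'x set \<Rightarrow> nat \<Rightarrow> nat \<Rightarrow> (nat set \<Rightarrow> (nat \<Rightarrow> nat \<Rightarrow> real) \<Rightarrow> 'x) \<Rightarrow> bool" where
  "sparse_flat f h u tau X p s \<alpha> =
     (\<forall>I. I \<subseteq> {1..p} \<and> card I \<ge> p - 2 * s \<longrightarrow>
        (\<forall>w. \<alpha> I w \<in> X) \<and> (\<forall>z\<in>X. \<alpha> I (restr I tau (Hu f h u tau z)) = z))"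

end

theory Submission
  imports Defs
begin

lemma check_iff:
  assumes "finite J"
  shows "check_sat f h u tau \<alpha> J Y \<longleftrightarrow>
    (\<forall>i\<in>J. \<forall>k<tau. Y i k = Hu f h u tau (\<alpha> J (restr J tau Y)) i k)"
proof -
  let ?x = "\<alpha> J (restr J tau Y)"
  have "check_sat f h u tau \<alpha> J Y \<longleftrightarrow> (\<Sum>i\<in>J. \<Sum>k<tau. (Y i k - Hu f h u tau ?x i k)^2) = 0"
    unfolding check_sat_def residual_def by simp
  also have "\<dots> \<longleftrightarrow> (\<forall>i\<in>J. (\<Sum>k<tau. (Y i k - Hu f h u tau ?x i k)^2) = 0)"
    using assms by (intro sum_nonneg_eq_0_iff) (auto intro: sum_nonneg)
  also have "\<dots> \<longleftrightarrow> (\<forall>i\<in>J. \<forall>k<tau. Y i k = Hu f h u tau ?x i k)"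
    by (simp add: sum_nonneg_eq_0_iff lessThan_iff) blast
  finally show ?thesis .
qed

lemma restr_eq:
  assumes "\<forall>i\<in>K. \<forall>k<tau. Y i k = Z i k"
  shows "restr K tau Y = restr K tau Z"
  using assms by (auto simp: restr_def fun_eq_iff)

theorem lemma1:
  fixes f :: "real^'n \<Rightarrow> real^'m \<Rightarrow> real^'n"
    and h :: "nat \<Rightarrow> real^'n \<Rightarrow> real"
    and u :: "nat \<Rightarrow> real^'m"
    and X :: "(real^'n) set"
    and \<alpha> :: "nat set \<Rightarrow> (nat \<Rightarrow> nat \<Rightarrow> real) \<Rightarrow> real^'n"
    and Y :: "nat \<Rightarrow> nat \<Rightarrow> real"
    and p s tau :: nat
    and I :: "nat set"
  assumes "2 * s \<le> p"
    and "sparse_flat f h u tau X p s \<alpha>"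
    and "I \<subseteq> {1..p}"
    and "card I > p - 2 * s"
    and "\<not> check_sat f h u tau \<alpha> I Y"
  shows "\<exists>Itemp \<subseteq> I. p - 2 * s \<le> card Itemp \<and> card Itemp \<le> p - 2 * s + 1 \<and> \<not> check_sat f h u tau \<alpha> Itemp Y"
proof (rule ccontr)
  assume neg: "\<not> ?thesis"
  let ?q = "p - 2 * s"
  let ?H = "Hu f h u tau"
  have finI: "finite I" using assms(3) finite_subset by blast
  have SF: "\<And>J. J \<subseteq> {1..p} \<Longrightarrow> card J \<ge> ?q \<Longrightarrow> (\<forall>w. \<alpha> J w \<in> X) \<and> (\<forall>z\<in>X. \<alpha> J (restr J tau (?H z)) = z)"
    using assms(2) unfolding sparse_flat_def by blast
  obtain K0 where K0: "K0 \<subseteq> I" "card K0 = ?q"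
    using obtain_subset_with_card_n[of ?q I] assms(4) by (metis less_imp_le)
  have finK0: "finite K0" using K0 finI finite_subset by blast
  have K0p: "K0 \<subseteq> {1..p}" using K0 assms(3) by blast
  have SFK0: "(\<forall>w. \<alpha> K0 w \<in> X) \<and> (\<forall>z\<in>X. \<alpha> K0 (restr K0 tau (?H z)) = z)"
    using SF[OF K0p] K0(2) by simp
  define xs where "xs = \<alpha> K0 (restr K0 tau Y)"
  have agree: "\<forall>k<tau. Y i k = ?H xs i k" if iI: "i \<in> I - K0" for i
  proof -
    define J where "J = insert i K0"
    have JI: "J \<subseteq> I" using K0 iI by (auto simp: J_def)
    have cJ: "card J = ?q + 1" using K0 finK0 iI by (simp add: J_def)
    have finJ: "finite J" using JI finI finite_subset by blast
    have sat: "check_sat f h u tau \<alpha> J Y" using neg JI cJ by (metis le_add1 order_refl)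
    define xJ where "xJ = \<alpha> J (restr J tau Y)"
    have ag: "\<forall>j\<in>J. \<forall>k<tau. Y j k = ?H xJ j k"
      using sat check_iff[OF finJ] unfolding xJ_def by blast
    have xJX: "xJ \<in> X" proof -
      have "J \<subseteq> {1..p}" using JI assms(3) by blast
      moreover have "?q \<le> card J" using cJ by simp
      ultimately show ?thesis using SF[of J] unfolding xJ_def by blast
    qed
    have "xs = \<alpha> K0 (restr K0 tau (?H xJ))"
      unfolding xs_def using ag by (intro arg_cong[where f="\<alpha> K0"] restr_eq) (auto simp: J_def)
    also have "\<dots> = xJ" using SFK0 xJX by blast
    finally show ?thesis using ag by (auto simp: J_def)
  qed
  obtain i0 where i0: "i0 \<in> I - K0"
  proof -
    have "\<not> I \<subseteq> K0" using K0 assms(4) card_mono[OF finK0] by fastforce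
    then show ?thesis using that by blast
  qed
  have agreeK: "\<forall>k<tau. Y i k = ?H xs i k" if iK: "i \<in> K0" for i
  proof -
    define J where "J = insert i0 K0"
    have JI: "J \<subseteq> I" using K0 i0 by (auto simp: J_def)
    have cJ: "card J = ?q + 1" using K0 finK0 i0 by (simp add: J_def)
    have finJ: "finite J" using JI finI finite_subset by blast
    have sat: "check_sat f h u tau \<alpha> J Y" using neg JI cJ by (metis le_add1 order_refl)
    define xJ where "xJ = \<alpha> J (restr J tau Y)"
    have ag: "\<forall>j\<in>J. \<forall>k<tau. Y j k = ?H xJ j k"
      using sat check_iff[OF finJ] unfolding xJ_def by blast
    have xJX: "xJ \<in> X" proof -
      have "J \<subseteq> {1..p}" using JI assms(3) by blast
      moreover have "?q \<le> card J" using cJ by simp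
      ultimately show ?thesis using SF[of J] unfolding xJ_def by blast
    qed
    have "xs = \<alpha> K0 (restr K0 tau (?H xJ))"
      unfolding xs_def using ag by (intro arg_cong[where f="\<alpha> K0"] restr_eq) (auto simp: J_def)
    also have "\<dots> = xJ" using SFK0 xJX by blast
    finally show ?thesis using ag iK by (auto simp: J_def)
  qed
  have agI: "\<forall>i\<in>I. \<forall>k<tau. Y i k = ?H xs i k" using agree agreeK by blast
  have xsX: "xs \<in> X" using SFK0 unfolding xs_def by blast
  have "\<alpha> I (restr I tau Y) = \<alpha> I (restr I tau (?H xs))"
    using agI by (intro arg_cong[where f="\<alpha> I"] restr_eq) auto
  also have "\<dots> = xs" using SF[OF assms(3)] assms(4) xsX by simp
  finally have "check_sat f h u tau \<alpha> I Y" using check_iff[OF finI, of f h u tau \<alpha> Y] agI by simp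
  with assms(5) show False by simp
qed

end
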